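(* Let $G$ be a graph and $X$ an $\operatorname{IR}(G)$-set. Then every flip-set $X'$ of $X$ is also an $\operatorname{IR}(G)$-set.
   Context: All graphs are finite and simple. For a graph $G=(V,E)$, $D\subseteq V$ and $v\in D$, $\operatorname{PN}(v,D)=N[v]-N[D-\{v\}]$ (closed neighbourhoods) and the set of external private neighbours is $\operatorname{EPN}(v,D)=\operatorname{PN}(v,D)-D$. A set $D$ is irredundant if $\operatorname{PN}(v,D)\neq\varnothing$ for every $v\in D$; $\operatorname{IR}(G)$ is the largest cardinality of an irredundant set, and an $\operatorname{IR}(G)$-set is an irredundant set of that cardinality. Flip-set: given an irredundant set $X$, split $X$ into disjoint sets $Y$ and $Z$ (either possibly empty) with $X=Y\cup Z$, such that every vertex of $Z$ is isolated in the induced subgraph $G[X]$ and every vertex $y\in Y$ has $\operatorname{EPN}(y,X)\neq\varnothing$; choose $y'\in\operatorname{EPN}(y,X)$ for each $y\in Y$ and let $Y'=\{y':y\in Y\}$. Then $X'=(X-Y)\cup Y'$ is called a flip-set of $X$ (using $Y'$). *)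

theory Defs
  imports Main
begin

definition graph :: "'a set \<Rightarrow> ('a \<Rightarrow> 'a \<Rightarrow> bool) \<Rightarrow> bool" where
  "graph V E \<longleftrightarrow> finite V \<and> (\<forall>u v. E u v \<longrightarrow> u \<in> V \<and> v \<in> V)
     \<and> (\<forall>u v. E u v \<longrightarrow> E v u) \<and> (\<forall>v. \<not> E v v)"

definition cnbhd :: "'a set \<Rightarrow> ('a \<Rightarrow> 'a \<Rightarrow> bool) \<Rightarrow> 'a \<Rightarrow> 'a set" where
  "cnbhd V E v = {u \<in> V. u = v \<or> E v u}"

definition cnbhd_set :: "'a set \<Rightarrow> ('a \<Rightarrow> 'a \<Rightarrow> bool) \<Rightarrow> 'a set \<Rightarrow> 'a set" where
  "cnbhd_set V E S = (\<Union>v\<in>S. cnbhd V E v)"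

definition PN :: "'a set \<Rightarrow> ('a \<Rightarrow> 'a \<Rightarrow> bool) \<Rightarrow> 'a \<Rightarrow> 'a set \<Rightarrow> 'a set" where
  "PN V E v D = cnbhd V E v - cnbhd_set V E (D - {v})"

definition EPN :: "'a set \<Rightarrow> ('a \<Rightarrow> 'a \<Rightarrow> bool) \<Rightarrow> 'a \<Rightarrow> 'a set \<Rightarrow> 'a set" where
  "EPN V E v D = PN V E v D - D"

definition irredundant :: "'a set \<Rightarrow> ('a \<Rightarrow> 'a \<Rightarrow> bool) \<Rightarrow> 'a set \<Rightarrow> bool" where
  "irredundant V E D \<longleftrightarrow> D \<subseteq> V \<and> (\<forall>v\<in>D. PN V E v D \<noteq> {})"

definition IR :: "'a set \<Rightarrow> ('a \<Rightarrow> 'a \<Rightarrow> bool) \<Rightarrow> nat" where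
  "IR V E = Max (card ` {D. irredundant V E D})"

definition IR_set :: "'a set \<Rightarrow> ('a \<Rightarrow> 'a \<Rightarrow> bool) \<Rightarrow> 'a set \<Rightarrow> bool" where
  "IR_set V E D \<longleftrightarrow> irredundant V E D \<and> card D = IR V E"

definition flip_set :: "'a set \<Rightarrow> ('a \<Rightarrow> 'a \<Rightarrow> bool) \<Rightarrow> 'a set \<Rightarrow> 'a set \<Rightarrow> bool" where
  "flip_set V E X X' \<longleftrightarrow> irredundant V E X \<and>
     (\<exists>Y Z f. X = Y \<union> Z \<and> Y \<inter> Z = {} \<and>
        (\<forall>z\<in>Z. \<forall>x\<in>X. \<not> E z x) \<and>
        (\<forall>y\<in>Y. EPN V E y X \<noteq> {}) \<and>
        (\<forall>y\<in>Y. f y \<in> EPN V E y X) \<and>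
        X' = (X - Y) \<union> f ` Y)"

end

theory Submission
  imports Defs
begin

theorem proposition2p2:
  assumes "graph V E"
    and "IR_set V E X"
    and "flip_set V E X X'"
  shows "IR_set V E X'"
proof -
  have fin: "finite V" and sym: "\<And>u v. E u v \<Longrightarrow> E v u" and irr: "\<And>v. \<not> E v v"
    and inV: "\<And>u v. E u v \<Longrightarrow> u \<in> V \<and> v \<in> V"
    using assms(1) unfolding graph_def by auto
  have irX: "irredundant V E X" and cX: "card X = IR V E" using assms(2) unfolding IR_set_def by auto
  have XV: "X \<subseteq> V" using irX unfolding irredundant_def by auto
  obtain Y Z f where XYZ: "X = Y \<union> Z" and dj: "Y \<inter> Z = {}"
    and iso: "\<forall>z\<in>Z. \<forall>x\<in>X. \<not> E z x"
    and fE: "\<forall>y\<in>Y. f y \<in> EPN V E y X" and X': "X' = (X - Y) \<union> f ` Y"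
    using assms(3) unfolding flip_set_def by blast
  have fPN: "\<And>y w. y \<in> Y \<Longrightarrow> w \<in> X \<Longrightarrow> w \<noteq> y \<Longrightarrow> f y \<noteq> w \<and> \<not> E w (f y)"
    using fE unfolding EPN_def PN_def cnbhd_set_def cnbhd_def by blast
  have fN: "\<And>y. y \<in> Y \<Longrightarrow> f y \<in> V \<and> (f y = y \<or> E y (f y)) \<and> f y \<notin> X"
    using fE unfolding EPN_def PN_def cnbhd_set_def cnbhd_def by blast
  have fny: "\<And>y. y \<in> Y \<Longrightarrow> E y (f y)"
    using fN XYZ by (metis UnCI)
  have inj: "inj_on f Y"
  proof (rule inj_onI)
    fix a b assume a: "a \<in> Y" and b: "b \<in> Y" and e: "f a = f b"
    show "a = b"
    proof (rule ccontr)
      assume "a \<noteq> b"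
      then have "\<not> E a (f b)" using fPN[OF b, of a] a XYZ by auto
      then show False using fny[OF a] e by simp
    qed
  qed
  have X'V: "X' \<subseteq> V" using X' XV fN by auto
  have irX': "irredundant V E X'"
    unfolding irredundant_def
  proof (intro conjI ballI X'V)
    fix v assume v: "v \<in> X'"
    show "PN V E v X' \<noteq> {}"
    proof (cases "v \<in> X - Y")
      case True
      then have vZ: "v \<in> Z" using XYZ by auto
      have "v \<in> PN V E v X'"
        unfolding PN_def cnbhd_set_def cnbhd_def
      proof (auto)
        show "v \<in> V" using vZ XYZ XV by auto
      next
        fix w assume w: "w \<in> X'" "w \<noteq> v" "v \<in> V" "E w v"
        show False
        proof (cases "w \<in> X")
          case True then show ?thesis using iso vZ sym w by blast
        next
          case False
          then obtain y where y: "y \<in> Y" "w = f y" using w X' by auto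
          have "v \<noteq> y" using vZ y dj by auto
          then show ?thesis using fPN[OF y(1), of v] vZ XYZ y w sym by auto
        qed
      qed
      then show ?thesis by blast
    next
      case False
      then obtain y where y: "y \<in> Y" "v = f y" using v X' by auto
      have yV: "y \<in> V" using y XYZ XV by auto
      have c1: "y \<in> cnbhd V E v" unfolding cnbhd_def using yV fny[OF y(1)] y sym by auto
      have c2': "\<And>w. w \<in> X' \<Longrightarrow> w \<noteq> v \<Longrightarrow> y = w \<or> E w y \<Longrightarrow> False"
      proof -
        fix w assume w: "w \<in> X'" "w \<noteq> v" "y = w \<or> E w y"
        show False
        proof (cases "w \<in> X")
          case True
          then have wZ: "w \<in> Z" using w X' fN XYZ by auto
          then have "w \<noteq> y" using y dj by auto
          then show ?thesis using iso w y XYZ wZ by blast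
        next
          case False
          then obtain y2 where y2: "y2 \<in> Y" "w = f y2" using w X' by auto
          have "y2 \<noteq> y" using y2 y w by auto
          moreover have "w \<noteq> y" using y2 y fN XYZ by auto
          ultimately show ?thesis using fPN[OF y2(1), of y] y XYZ y2 w sym by auto
        qed
      qed
      have c2: "y \<notin> cnbhd_set V E (X' - {v})"
        unfolding cnbhd_set_def cnbhd_def using c2' by blast
      have "y \<in> PN V E v X'" unfolding PN_def using c1 c2 by blast
      then show ?thesis by blast
    qed
  qed
  have finX: "finite X" using XV fin finite_subset by blast
  have "card X' = card (X - Y) + card (f ` Y)"
    unfolding X' by (rule card_Un_disjoint) (use finX XYZ fN in auto)
  also have "card (f ` Y) = card Y" using card_image[OF inj] .
  also have "card (X - Y) + card Y = card X"
    using finX XYZ by (metis Un_upper1 card_Diff_subset card_mono le_add_diff_inverse2 finite_subset)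
  finally show ?thesis unfolding IR_set_def using irX' cX by simp
qed

end
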